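(* For every integer $n>2$, $\delta(n) < n/2$.
   Context: A double-$n$ string is a string of length $2n$ over an alphabet of $n$ symbols in which each symbol appears exactly twice. Positions in the string are numbered $1,\dots,2n$. The distance between two distinct symbols is the minimum, over an occurrence of the first symbol and an occurrence of the second, of the absolute difference of their positions (so adjacent entries have distance $1$). The diameter of a double-$n$ string ($n\ge 2$) is the maximum of the distance over all pairs of distinct symbols. $\delta(n)$ denotes the minimum diameter over all double-$n$ strings. *)

theory Defs
  imports Main
begin

(* A double-n string: a word of length 2n over the alphabet {0..<n}
   in which every symbol occurs exactly twice.  Positions are list
   indices 0..2n-1 (shifting from 1..2n does not change distances). *)
definition double_string :: "nat \<Rightarrow> nat list \<Rightarrow> bool" where
  "double_string n w \<longleftrightarrow> length w = 2 * n \<and> set w \<subseteq> {0..<n}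
     \<and> (\<forall>a\<in>{0..<n}. count_list w a = 2)"

definition sdist :: "nat list \<Rightarrow> nat \<Rightarrow> nat \<Rightarrow> nat" where
  "sdist w a b = Min {nat \<bar>int i - int j\<bar> | i j. i < length w \<and> j < length w
                        \<and> w ! i = a \<and> w ! j = b}"

definition diameter :: "nat \<Rightarrow> nat list \<Rightarrow> nat" where
  "diameter n w = Max {sdist w a b | a b. a < n \<and> b < n \<and> a \<noteq> b}"

definition delta :: "nat \<Rightarrow> nat" where
  "delta n = Min {diameter n w | w. double_string n w}"

end

theory Submission
  imports Defs
begin

definition Q :: "nat \<Rightarrow> nat \<Rightarrow> nat \<Rightarrow> nat" where
 "Q n m x = n + (if x < m - 1 then x else if x = m - 1 then n - 2 else if x < n - 1 then x - 1 else n - 1)"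
definition ok where "ok d (i::nat) (j::nat) \<longleftrightarrow> i \<le> j + d \<and> j \<le> i + d"

lemma key_lt:
  assumes nd: "(n = 2*d+1 \<and> m = d) \<or> (n = 2*d+2 \<and> m = d+1)" and d: "0 < d"
    and ab: "a < b" "b < n"
  shows "ok d a b \<or> ok d (Q n m a) b \<or> ok d a (Q n m b) \<or> ok d (Q n m a) (Q n m b)"
proof (cases "b \<le> a + d")
  case True then show ?thesis using ab by (simp add: ok_def)
next
  case F: False
  show ?thesis
  proof (cases "b = n - 1")
    case b: True
    have Qb: "Q n m b = 2*n - 1" using b nd d by (auto simp: Q_def)
    show ?thesis
    proof (cases "a < m - 1")
      case True
      hence "Q n m a = n + a" by (simp add: Q_def)
      thus ?thesis using True b nd d by (auto simp: ok_def)
    next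
      case False
      have "a = m - 1" using False F b nd by linarith
      hence "Q n m a = 2*n - 2" using nd d by (auto simp: Q_def)
      thus ?thesis using Qb nd d by (auto simp: ok_def)
    qed
  next
    case b: False
    have a: "a < m - 1" using F b ab nd by linarith
    hence Qa: "Q n m a = n + a" by (simp add: Q_def)
    show ?thesis
    proof (cases "b = a + d + 1 \<and> n = 2*d+2")
      case True
      have "Q n m b = n + b - 1" using True a b nd by (auto simp: Q_def)
      thus ?thesis using Qa True by (auto simp: ok_def)
    next
      case False
      thus ?thesis using Qa F b ab nd by (auto simp: ok_def)
    qed
  qed
qed

lemma key:
  assumes nd: "(n = 2*d+1 \<and> m = d) \<or> (n = 2*d+2 \<and> m = d+1)" and d: "0 < d"
    and ab: "a \<noteq> b" "a < n" "b < n"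
  shows "ok d a b \<or> ok d (Q n m a) b \<or> ok d a (Q n m b) \<or> ok d (Q n m a) (Q n m b)"
proof (cases "a < b")
  case True thus ?thesis using key_lt[OF nd d True ab(3)] by blast
next
  case False
  hence "b < a" using ab by simp
  from key_lt[OF nd d this ab(2)] show ?thesis by (auto simp: ok_def)
qed

lemma count_upt: "count_list [i..<j] x = (if i \<le> x \<and> x < j then 1 else 0)"
  by (induction j) auto

definition pp :: "nat \<Rightarrow> nat \<Rightarrow> nat list" where
  "pp n m = [0..<m-1] @ [m..<n-1] @ [m-1, n-1]"

definition ww :: "nat \<Rightarrow> nat \<Rightarrow> nat list" where
  "ww n m = [0..<n] @ pp n m"

lemma pp_nth:
  assumes "1 \<le> m" "m < n - 1" "x < n"
  shows "pp n m ! (Q n m x - n) = x"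
proof -
  consider "x < m - 1" | "x = m - 1" | "m - 1 < x \<and> x < n - 1" | "x = n - 1" using assms by linarith
  then show ?thesis
  proof cases
    case 1 thus ?thesis by (simp add: Q_def pp_def nth_append)
  next
    case 2
    have "Q n m x - n = length ([0..<m-1] @ [m..<n-1])" using 2 assms by (simp add: Q_def)
    thus ?thesis using 2 unfolding pp_def by (simp only: append_assoc[symmetric] nth_append_length)
  next
    case 3 thus ?thesis using assms by (simp add: Q_def pp_def nth_append; linarith)
  next
    case 4
    have "Q n m x - n = length ([0..<m-1] @ [m..<n-1]) + 1" using 4 assms by (simp add: Q_def; linarith)
    thus ?thesis using 4 unfolding pp_def by (simp only: append_assoc[symmetric] nth_append_length_plus) (simp; linarith)
  qed
qed

lemma len_pp: "1 \<le> m \<Longrightarrow> m < n - 1 \<Longrightarrow> length (pp n m) = n"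
  by (simp add: pp_def)

lemma ww_props:
  assumes "1 \<le> m" "m < n - 1" "x < n"
  shows "ww n m ! x = x" "ww n m ! (Q n m x) = x" "Q n m x < 2 * n" "length (ww n m) = 2 * n"
proof -
  show "ww n m ! x = x" using assms by (simp add: ww_def nth_append)
  show "Q n m x < 2 * n" using assms by (simp add: Q_def; linarith)
  show "length (ww n m) = 2 * n" using assms len_pp by (simp add: ww_def)
  have "Q n m x \<ge> n" by (simp add: Q_def)
  thus "ww n m ! (Q n m x) = x" using assms pp_nth[OF assms] by (simp add: ww_def nth_append)
qed

lemma ww_double:
  assumes "1 \<le> m" "m < n - 1"
  shows "double_string n (ww n m)"
  unfolding double_string_def
proof (intro conjI ballI)
  show "length (ww n m) = 2 * n" using ww_props(4)[OF assms, of 0] assms by simp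
  show "set (ww n m) \<subseteq> {0..<n}" using assms by (auto simp: ww_def pp_def)
  fix a assume "a \<in> {0..<n}"
  thus "count_list (ww n m) a = 2" using assms
    by (auto simp: ww_def pp_def count_upt)
qed

lemma sdist_le:
  assumes "i < length w" "j < length w" "w ! i = a" "w ! j = b" "ok d i j"
  shows "sdist w a b \<le> d"
proof -
  let ?S = "{nat \<bar>int i - int j\<bar> | i j. i < length w \<and> j < length w \<and> w ! i = a \<and> w ! j = b}"
  have fin: "finite ?S"
  proof -
    have "?S \<subseteq> (\<lambda>(i,j). nat \<bar>int i - int j\<bar>) ` ({..<length w} \<times> {..<length w})" by auto
    thus ?thesis by (rule finite_subset) auto
  qed
  have mem: "nat \<bar>int i - int j\<bar> \<in> ?S" using assms by blast
  have "nat \<bar>int i - int j\<bar> \<le> d" using assms(5) by (auto simp: ok_def)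
  thus ?thesis unfolding sdist_def using Min_le[OF fin mem] by linarith
qed

theorem lemma3p1:
  fixes n :: nat
  assumes "n > 2"
  shows "2 * delta n < n"
proof -
  define d where "d = (n - 1) div 2"
  define m where "m = d + (if even n then 1 else 0)"
  have nd: "(n = 2*d+1 \<and> m = d) \<or> (n = 2*d+2 \<and> m = d+1)" 
  proof (cases "even n")
    case True
    then obtain k where k: "n = 2*k" by blast
    have "d = k - 1" unfolding d_def k by presburger
    thus ?thesis using True k assms unfolding m_def by auto
  next
    case False
    then obtain k where k: "n = 2*k+1" using oddE by blast
    have "d = k" unfolding d_def k by presburger
    thus ?thesis using False k assms unfolding m_def by auto
  qed
  have d0: "0 < d" using assms nd by auto
  have m1: "1 \<le> m" "m < n - 1" using nd d0 by auto
  let ?w = "ww n m"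
  have ds: "double_string n ?w" by (rule ww_double[OF m1])
  have sd: "sdist ?w a b \<le> d" if "a < n" "b < n" "a \<noteq> b" for a b
  proof -
    note P = ww_props[OF m1]
    have L: "length ?w = 2*n" "a < 2*n" "b < 2*n" using P(4)[OF that(1)] that by auto
    note A = P[OF that(1)] and B = P[OF that(2)]
    from key[OF nd d0 that(3,1,2)] show ?thesis
    proof (elim disjE)
      assume h: "ok d a b" show ?thesis by (rule sdist_le[of a ?w b a b d]) (use L A B h in simp_all)
    next
      assume h: "ok d (Q n m a) b" show ?thesis by (rule sdist_le[of "Q n m a" ?w b a b d]) (use L A B h in simp_all)
    next
      assume h: "ok d a (Q n m b)" show ?thesis by (rule sdist_le[of a ?w "Q n m b" a b d]) (use L A B h in simp_all)
    next
      assume h: "ok d (Q n m a) (Q n m b)" show ?thesis by (rule sdist_le[of "Q n m a" ?w "Q n m b" a b d]) (use L A B h in simp_all)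
    qed
  qed
  have diam: "diameter n ?w \<le> d"
  proof -
    let ?T = "{sdist ?w a b | a b. a < n \<and> b < n \<and> a \<noteq> b}"
    have fin: "finite ?T"
    proof -
      have "?T \<subseteq> (\<lambda>(a,b). sdist ?w a b) ` ({..<n} \<times> {..<n})" by auto
      thus ?thesis by (rule finite_subset) auto
    qed
    have "sdist ?w 0 1 \<in> ?T" using assms by (intro CollectI exI[of _ 0] exI[of _ 1]) auto
    hence ne: "?T \<noteq> {}" by blast
    show ?thesis unfolding diameter_def using sd by (auto simp: Max_le_iff[OF fin ne])
  qed
  have "delta n \<le> diameter n ?w"
  proof -
    let ?U = "{diameter n w | w. double_string n w}"
    have "?U \<subseteq> diameter n ` {w. set w \<subseteq> {0..<n} \<and> length w = 2 * n}"
      by (auto simp: double_string_def)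
    hence fin: "finite ?U" by (rule finite_subset) (simp add: finite_lists_length_eq)
    show ?thesis unfolding delta_def by (rule Min_le[OF fin]) (use ds in blast)
  qed
  thus ?thesis using diam nd by linarith
qed

end
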